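(* Let $\mathcal{X},\mathcal{Y}$ be finite. For a distribution $Q$ on $\mathcal{X}$ and a false channel $\tilde W$, the false mutual information $\tilde I(Q,\tilde W)$ is: (1) non-negative; (2) concave in $Q$ (for fixed $\tilde W$); (3) convex in $\tilde W$ (for fixed $Q$); (4) bounded above by $\sigma\log|\mathcal{X}|$, where $\sigma=\max_x\sum_y\tilde W(y|x)$.
   Context: A false channel (false conditional probability) is any non-negative function $\tilde W(y|x)$ on $\mathcal{X}\times\mathcal{Y}$ (not necessarily summing to $1$ over $y$). The false mutual information is $$\tilde I(Q,\tilde W)=\sum_{x,y}Q(x)\tilde W(y|x)\log\frac{\tilde W(y|x)}{\sum_{x'}Q(x')\tilde W(y|x')},$$ where terms with $Q(x)\tilde W(y|x)=0$ are taken to be $0$ (convention $0\log0=0$). *)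

theory Defs
  imports Main "HOL.Transcendental"
begin

definition is_distr :: "('x::finite \<Rightarrow> real) \<Rightarrow> bool" where
  "is_distr Q \<longleftrightarrow> (\<forall>x. 0 \<le> Q x) \<and> (\<Sum>x\<in>UNIV. Q x) = 1"

text \<open>A false channel: any non-negative function; W x y stands for W(y|x).\<close>
definition false_channel :: "('x \<Rightarrow> 'y \<Rightarrow> real) \<Rightarrow> bool" where
  "false_channel W \<longleftrightarrow> (\<forall>x y. 0 \<le> W x y)"

definition false_mi :: "('x::finite \<Rightarrow> real) \<Rightarrow> ('x \<Rightarrow> 'y::finite \<Rightarrow> real) \<Rightarrow> real" where
  "false_mi Q W = (\<Sum>x\<in>UNIV. \<Sum>y\<in>UNIV.
      (if Q x * W x y = 0 then 0
       else Q x * W x y * ln (W x y / (\<Sum>x'\<in>UNIV. Q x' * W x' y))))"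

definition fc_sigma :: "('x::finite \<Rightarrow> 'y::finite \<Rightarrow> real) \<Rightarrow> real" where
  "fc_sigma W = Max (range (\<lambda>x. \<Sum>y\<in>UNIV. W x y))"

end

theory Submission
  imports Defs
begin

lemma pt:
  fixes a b c :: real
  assumes "0 \<le> a" "0 \<le> b" "0 < a \<longrightarrow> 0 < b" "0 < c"
  shows "a * ln c + a - b * c \<le> a * ln (a / b)"
proof (cases "a = 0")
  case True then show ?thesis using assms by simp
next
  case False
  then have a: "a > 0" using assms by simp
  then have b: "b > 0" using assms by simp
  have "ln (b * c / a) \<le> b * c / a - 1"
    by (rule ln_le_minus_one) (use a b assms in simp)
  moreover have "ln (b * c / a) = ln b + ln c - ln a"
    using a b assms by (simp add: ln_div ln_mult)
  moreover have "ln (a / b) = ln a - ln b" using a b by (simp add: ln_div)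
  ultimately have "ln c - ln (a/b) \<le> b * c / a - 1" by simp
  then have "a * (ln c - ln (a/b)) \<le> a * (b * c / a - 1)"
    using a by (simp add: mult_left_mono)
  then show ?thesis using a by (simp add: algebra_simps)
qed

lemma logsum:
  fixes a b :: "'i \<Rightarrow> real"
  assumes fin: "finite I" and a: "\<forall>i\<in>I. 0 \<le> a i" and b: "\<forall>i\<in>I. 0 \<le> b i"
    and ab: "\<forall>i\<in>I. 0 < a i \<longrightarrow> 0 < b i"
  shows "sum a I * ln (sum a I / sum b I) \<le> (\<Sum>i\<in>I. a i * ln (a i / b i))"
proof (cases "sum a I = 0")
  case True
  then have "\<forall>i\<in>I. a i = 0" using sum_nonneg_eq_0_iff[OF fin] a by blast
  then show ?thesis using True by simp
next
  case False
  then obtain i where i: "i \<in> I" "a i \<noteq> 0" by (meson sum.neutral)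
  then have "a i > 0" using a by force
  then have "b i > 0" using ab i by blast
  moreover have "b i \<le> sum b I" using member_le_sum[OF i(1)] b fin by blast
  ultimately have B: "sum b I > 0" by linarith
  have A: "sum a I > 0" using False a sum_nonneg[of I a] by force
  define c where "c = sum a I / sum b I"
  have c: "c > 0" using A B c_def by simp
  have "(\<Sum>i\<in>I. a i * ln c + a i - b i * c) \<le> (\<Sum>i\<in>I. a i * ln (a i / b i))"
    by (rule sum_mono) (use pt a b ab c in blast)
  moreover have "(\<Sum>i\<in>I. a i * ln c + a i - b i * c) = sum a I * ln c + sum a I - sum b I * c"
    by (simp add: sum.distrib sum_subtractf sum_distrib_right)
  moreover have "sum b I * c = sum a I" using B c_def by simp
  ultimately show ?thesis unfolding c_def by simp
qed

lemma logsum2: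
  fixes a1 a2 b1 b2 :: real
  assumes "0 \<le> a1" "0 \<le> a2" "0 \<le> b1" "0 \<le> b2" "0 < a1 \<longrightarrow> 0 < b1" "0 < a2 \<longrightarrow> 0 < b2"
  shows "(a1 + a2) * ln ((a1 + a2) / (b1 + b2)) \<le> a1 * ln (a1 / b1) + a2 * ln (a2 / b2)"
proof -
  have "sum (\<lambda>i. if i then a1 else a2) UNIV * ln (sum (\<lambda>i. if i then a1 else a2) UNIV / sum (\<lambda>i. if i then b1 else b2) UNIV)
     \<le> (\<Sum>i\<in>UNIV. (if i then a1 else a2) * ln ((if i then a1 else a2) / (if i then b1 else b2)))"
    by (rule logsum) (use assms in auto)
  then show ?thesis by (simp add: UNIV_bool add.commute)
qed

lemma scale:
  fixes t a b :: real
  assumes "0 \<le> t"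
  shows "(t * a) * ln (t * a / (t * b)) = t * (a * ln (a / b))"
  using assms by (cases "t = 0") auto

definition PP :: "('x::finite \<Rightarrow> real) \<Rightarrow> ('x \<Rightarrow> 'y \<Rightarrow> real) \<Rightarrow> 'y \<Rightarrow> real" where
  "PP Q W y = (\<Sum>x'\<in>UNIV. Q x' * W x' y)"

lemma fmi_eq: "false_mi Q W = (\<Sum>x\<in>UNIV. \<Sum>y\<in>UNIV. Q x * W x y * ln (W x y / PP Q W y))"
  unfolding false_mi_def PP_def by (intro sum.cong refl) auto

lemma PP_ge:
  assumes "\<forall>x. 0 \<le> Q x" "\<forall>x y. 0 \<le> W x y"
  shows "Q x * W x y \<le> PP Q W y"
  unfolding PP_def by (rule member_le_sum) (use assms in auto)

lemma PP_nonneg: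
  assumes "\<forall>x. 0 \<le> Q x" "\<forall>x y. 0 \<le> W x y"
  shows "0 \<le> PP Q W y"
  unfolding PP_def by (rule sum_nonneg) (use assms in auto)

lemma hb:
  assumes "\<forall>x. 0 \<le> Q x" "\<forall>x y. 0 \<le> W x y" "0 < Q x * W x y"
  shows "0 < Q x * PP Q W y"
proof -
  have "Q x \<noteq> 0" using assms(3) by auto
  then have "Q x > 0" using assms(1) by (simp add: order_less_le)
  moreover have "PP Q W y > 0" using PP_ge[OF assms(1,2), of x y] assms(3) by linarith
  ultimately show ?thesis by simp
qed

lemma term_rw: "(Q::real) * W * ln (W / P) = (Q * W) * ln (Q * W / (Q * P))"
  by (cases "Q = 0") (simp_all add: mult_divide_mult_cancel_left)

lemma sum_QP:
  assumes "is_distr Q"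
  shows "(\<Sum>x\<in>UNIV. Q x * c) = c"
  using assms unfolding is_distr_def by (simp add: sum_distrib_right[symmetric])

lemma part1:
  assumes Q: "is_distr Q" and W: "false_channel W"
  shows "0 \<le> false_mi Q W"
proof -
  have Qn: "\<forall>x. 0 \<le> Q x" and Wn: "\<forall>x y. 0 \<le> W x y"
    using Q W unfolding is_distr_def false_channel_def by auto
  have "false_mi Q W = (\<Sum>y\<in>UNIV. \<Sum>x\<in>UNIV. (Q x * W x y) * ln (Q x * W x y / (Q x * PP Q W y)))"
    unfolding fmi_eq by (subst sum.swap) (simp add: term_rw)
  also have "\<dots> \<ge> 0"
  proof (rule sum_nonneg)
    fix y assume "y \<in> (UNIV::'b set)"
    have "(\<Sum>x\<in>UNIV. Q x * W x y) * ln ((\<Sum>x\<in>UNIV. Q x * W x y) / (\<Sum>x\<in>UNIV. Q x * PP Q W y))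
        \<le> (\<Sum>x\<in>UNIV. (Q x * W x y) * ln (Q x * W x y / (Q x * PP Q W y)))"
      by (rule logsum) (use Qn Wn hb[OF Qn Wn] PP_nonneg[OF Qn Wn] in auto)
    moreover have "(\<Sum>x\<in>UNIV. Q x * PP Q W y) = PP Q W y" by (rule sum_QP[OF Q])
    moreover have "(\<Sum>x\<in>UNIV. Q x * W x y) = PP Q W y" unfolding PP_def ..
    ultimately show "0 \<le> (\<Sum>x\<in>UNIV. (Q x * W x y) * ln (Q x * W x y / (Q x * PP Q W y)))"
      by (cases "PP Q W y = 0") auto
  qed
  finally show ?thesis .
qed

lemma part3:
  assumes Q: "is_distr Q" and W1: "false_channel W1" and W2: "false_channel W2"
    and t: "0 \<le> t" "t \<le> 1"
  shows "false_mi Q (\<lambda>x y. t * W1 x y + (1 - t) * W2 x y)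
              \<le> t * false_mi Q W1 + (1 - t) * false_mi Q W2"
proof -
  define W where "W = (\<lambda>x y. t * W1 x y + (1 - t) * W2 x y)"
  have Qn: "\<forall>x. 0 \<le> Q x" and W1n: "\<forall>x y. 0 \<le> W1 x y" and W2n: "\<forall>x y. 0 \<le> W2 x y"
    using Q W1 W2 unfolding is_distr_def false_channel_def by auto
  have PPW: "PP Q W y = t * PP Q W1 y + (1 - t) * PP Q W2 y" for y
    unfolding PP_def W_def sum_distrib_left sum.distrib[symmetric] by (rule sum.cong) (auto simp: algebra_simps)
  have key: "Q x * W x y * ln (W x y / PP Q W y) \<le>
      t * (Q x * W1 x y * ln (W1 x y / PP Q W1 y)) + (1 - t) * (Q x * W2 x y * ln (W2 x y / PP Q W2 y))"
    for x y
  proof -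
    define a1 where "a1 = Q x * W1 x y"
    define a2 where "a2 = Q x * W2 x y"
    define b1 where "b1 = Q x * PP Q W1 y"
    define b2 where "b2 = Q x * PP Q W2 y"
    have a1: "0 \<le> a1" and a2: "0 \<le> a2" using Qn W1n W2n a1_def a2_def by auto
    have b1: "0 \<le> b1" and b2: "0 \<le> b2" using Qn PP_nonneg[OF Qn W1n] PP_nonneg[OF Qn W2n] b1_def b2_def by auto
    have ab1: "0 < a1 \<longrightarrow> 0 < b1" using hb[OF Qn W1n] a1_def b1_def by blast
    have ab2: "0 < a2 \<longrightarrow> 0 < b2" using hb[OF Qn W2n] a2_def b2_def by blast
    have "(t * a1 + (1 - t) * a2) * ln ((t * a1 + (1 - t) * a2) / (t * b1 + (1 - t) * b2))
        \<le> (t * a1) * ln (t * a1 / (t * b1)) + ((1 - t) * a2) * ln ((1 - t) * a2 / ((1 - t) * b2))"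
      proof (rule logsum2)
      show "0 < t * a1 \<longrightarrow> 0 < t * b1"
      proof
        assume "0 < t * a1"
        then have "0 < t" "0 < a1" using t a1 by (auto simp: zero_less_mult_iff)
        then show "0 < t * b1" using ab1 by simp
      qed
      show "0 < (1 - t) * a2 \<longrightarrow> 0 < (1 - t) * b2"
      proof
        assume "0 < (1 - t) * a2"
        then have "0 < 1 - t" "0 < a2" using t a2 by (auto simp: zero_less_mult_iff)
        then show "0 < (1 - t) * b2" using ab2 by simp
      qed
    qed (use a1 a2 b1 b2 t in simp_all)
    also have "\<dots> = t * (a1 * ln (a1 / b1)) + (1 - t) * (a2 * ln (a2 / b2))"
      using scale t by simp
    finally have *: "(t * a1 + (1 - t) * a2) * ln ((t * a1 + (1 - t) * a2) / (t * b1 + (1 - t) * b2))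
        \<le> t * (a1 * ln (a1 / b1)) + (1 - t) * (a2 * ln (a2 / b2))" .
    have qw: "Q x * W x y = t * a1 + (1 - t) * a2" unfolding W_def a1_def a2_def by (simp add: algebra_simps)
    have qp: "Q x * PP Q W y = t * b1 + (1 - t) * b2" unfolding PPW b1_def b2_def by (simp add: algebra_simps)
    have "Q x * W x y * ln (W x y / PP Q W y) = (Q x * W x y) * ln (Q x * W x y / (Q x * PP Q W y))"
      by (rule term_rw)
    also have "\<dots> = (t * a1 + (1 - t) * a2) * ln ((t * a1 + (1 - t) * a2) / (t * b1 + (1 - t) * b2))"
      by (simp only: qw qp)
    finally have e0: "Q x * W x y * ln (W x y / PP Q W y) =
      (t * a1 + (1 - t) * a2) * ln ((t * a1 + (1 - t) * a2) / (t * b1 + (1 - t) * b2))" .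
    have e1: "Q x * W1 x y * ln (W1 x y / PP Q W1 y) = a1 * ln (a1 / b1)"
      unfolding a1_def b1_def by (rule term_rw)
    have e2: "Q x * W2 x y * ln (W2 x y / PP Q W2 y) = a2 * ln (a2 / b2)"
      unfolding a2_def b2_def by (rule term_rw)
    show ?thesis unfolding e0 e1 e2 by (rule *)
  qed
  have "false_mi Q W \<le> (\<Sum>x\<in>UNIV. \<Sum>y\<in>UNIV. t * (Q x * W1 x y * ln (W1 x y / PP Q W1 y)) + (1 - t) * (Q x * W2 x y * ln (W2 x y / PP Q W2 y)))"
    unfolding fmi_eq by (intro sum_mono key)
  also have "\<dots> = t * false_mi Q W1 + (1 - t) * false_mi Q W2"
    unfolding fmi_eq by (simp add: sum.distrib sum_distrib_left)
  finally show ?thesis unfolding W_def .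
qed

lemma decomp:
  assumes Qn: "\<forall>x. 0 \<le> Q x" and Wn: "\<forall>x y. 0 \<le> W x y"
  shows "false_mi Q W = (\<Sum>x\<in>UNIV. Q x * (\<Sum>y\<in>UNIV. W x y * ln (W x y)))
      - (\<Sum>y\<in>UNIV. PP Q W y * ln (PP Q W y))"
proof -
  have pt: "Q x * W x y * ln (W x y / PP Q W y) = Q x * (W x y * ln (W x y)) - Q x * W x y * ln (PP Q W y)" for x y
  proof (cases "Q x * W x y = 0")
    case True then show ?thesis by auto
  next
    case False
    then have "0 < Q x * W x y" using Qn Wn by (simp add: order_less_le)
    moreover have "Q x * W x y \<le> PP Q W y" using PP_ge[OF Qn Wn] .
    ultimately have "0 < PP Q W y" by linarith
    moreover have "0 < W x y" "0 < Q x" using Qn Wn False by (auto simp: order_less_le)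
    ultimately have "0 < W x y" "0 < PP Q W y" "0 < Q x" by auto
    then show ?thesis by (simp add: ln_div algebra_simps)
  qed
  have "false_mi Q W = (\<Sum>x\<in>UNIV. \<Sum>y\<in>UNIV. Q x * (W x y * ln (W x y)) - Q x * W x y * ln (PP Q W y))"
    unfolding fmi_eq pt ..
  also have "\<dots> = (\<Sum>x\<in>UNIV. Q x * (\<Sum>y\<in>UNIV. W x y * ln (W x y)))
      - (\<Sum>x\<in>UNIV. \<Sum>y\<in>UNIV. Q x * W x y * ln (PP Q W y))"
    by (simp add: sum_subtractf sum_distrib_left)
  also have "(\<Sum>x\<in>UNIV. \<Sum>y\<in>UNIV. Q x * W x y * ln (PP Q W y)) = (\<Sum>y\<in>UNIV. PP Q W y * ln (PP Q W y))"
    unfolding PP_def by (subst sum.swap) (simp add: sum_distrib_right)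
  finally show ?thesis .
qed

lemma aux: "(C::real) \<le> t*C1 + (1-t)*C2 \<Longrightarrow> t*(A1-C1) + (1-t)*(A2-C2) \<le> (t*A1+(1-t)*A2) - C"
  by (simp add: algebra_simps)

lemma part2:
  assumes Q1: "is_distr Q1" and Q2: "is_distr Q2" and W: "false_channel W"
    and t: "0 \<le> t" "t \<le> 1"
  shows "t * false_mi Q1 W + (1 - t) * false_mi Q2 W
              \<le> false_mi (\<lambda>x. t * Q1 x + (1 - t) * Q2 x) W"
proof -
  define Q where "Q = (\<lambda>x. t * Q1 x + (1 - t) * Q2 x)"
  have Q1n: "\<forall>x. 0 \<le> Q1 x" and Q2n: "\<forall>x. 0 \<le> Q2 x" and Wn: "\<forall>x y. 0 \<le> W x y"
    using Q1 Q2 W unfolding is_distr_def false_channel_def by auto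
  have Qn: "\<forall>x. 0 \<le> Q x" using Q1n Q2n t unfolding Q_def by auto
  define K where "K = (\<lambda>x. \<Sum>y\<in>UNIV. W x y * ln (W x y))"
  have PPQ: "PP Q W y = t * PP Q1 W y + (1 - t) * PP Q2 W y" for y
    unfolding PP_def Q_def sum_distrib_left sum.distrib[symmetric] by (rule sum.cong) (auto simp: algebra_simps)
  have lin: "(\<Sum>x\<in>UNIV. Q x * K x) = t * (\<Sum>x\<in>UNIV. Q1 x * K x) + (1 - t) * (\<Sum>x\<in>UNIV. Q2 x * K x)"
    unfolding Q_def sum_distrib_left sum.distrib[symmetric] by (rule sum.cong) (auto simp: algebra_simps)
  have cvx: "PP Q W y * ln (PP Q W y) \<le> t * (PP Q1 W y * ln (PP Q1 W y)) + (1 - t) * (PP Q2 W y * ln (PP Q2 W y))" for y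
  proof -
    have p1: "0 \<le> PP Q1 W y" and p2: "0 \<le> PP Q2 W y" using PP_nonneg[OF Q1n Wn] PP_nonneg[OF Q2n Wn] by auto
    have "(t * PP Q1 W y + (1 - t) * PP Q2 W y) * ln ((t * PP Q1 W y + (1 - t) * PP Q2 W y) / (t * 1 + (1 - t) * 1))
       \<le> (t * PP Q1 W y) * ln (t * PP Q1 W y / (t * 1)) + ((1 - t) * PP Q2 W y) * ln ((1 - t) * PP Q2 W y / ((1 - t) * 1))"
    proof (rule logsum2)
      show "0 < t * PP Q1 W y \<longrightarrow> 0 < t * 1" using t p1 by (auto simp: zero_less_mult_iff)
      show "0 < (1 - t) * PP Q2 W y \<longrightarrow> 0 < (1 - t) * 1" using t p2 by (auto simp: zero_less_mult_iff)
    qed (use p1 p2 t in simp_all)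
    also have "\<dots> = t * (PP Q1 W y * ln (PP Q1 W y / 1)) + (1 - t) * (PP Q2 W y * ln (PP Q2 W y / 1))"
    proof -
      have "0 \<le> 1 - t" using t by simp
      then show ?thesis by (simp only: scale[OF t(1)] scale[OF \<open>0 \<le> 1 - t\<close>])
    qed
    finally show ?thesis unfolding PPQ by simp
  qed
  have "(\<Sum>y\<in>UNIV. PP Q W y * ln (PP Q W y)) \<le> (\<Sum>y\<in>UNIV. t * (PP Q1 W y * ln (PP Q1 W y)) + (1 - t) * (PP Q2 W y * ln (PP Q2 W y)))"
    by (intro sum_mono cvx)
  also have "\<dots> = t * (\<Sum>y\<in>UNIV. PP Q1 W y * ln (PP Q1 W y)) + (1 - t) * (\<Sum>y\<in>UNIV. PP Q2 W y * ln (PP Q2 W y))"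
    by (simp add: sum.distrib sum_distrib_left)
  finally have "(\<Sum>y\<in>UNIV. PP Q W y * ln (PP Q W y)) \<le> \<dots>" .
  then have C: "(\<Sum>y\<in>UNIV. PP Q W y * ln (PP Q W y)) \<le> t * (\<Sum>y\<in>UNIV. PP Q1 W y * ln (PP Q1 W y)) + (1 - t) * (\<Sum>y\<in>UNIV. PP Q2 W y * ln (PP Q2 W y))" .
  show ?thesis
    unfolding Q_def[symmetric] decomp[OF Qn Wn] decomp[OF Q1n Wn] decomp[OF Q2n Wn] lin[unfolded K_def]
    by (rule aux[OF C])
qed

lemma part4:
  fixes Q :: "'x::finite \<Rightarrow> real" and W :: "'x \<Rightarrow> 'y::finite \<Rightarrow> real"
  assumes Q: "is_distr Q" and W: "false_channel W"
  shows "false_mi Q W \<le> fc_sigma W * ln (real (card (UNIV :: 'x set)))"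
proof -
  have Qn: "\<forall>x. 0 \<le> Q x" and Wn: "\<forall>x y. 0 \<le> W x y" and Qs: "(\<Sum>x\<in>UNIV. Q x) = 1"
    using Q W unfolding is_distr_def false_channel_def by auto
  have Q1: "Q x \<le> 1" for x
    using member_le_sum[of x UNIV Q] Qn Qs by auto
  have nl: "0 \<le> -(Q x * ln (Q x))" for x
  proof (cases "Q x = 0")
    case True then show ?thesis by simp
  next
    case False
    then have "0 < Q x" using Qn by (simp add: order_less_le)
    moreover then have "ln (Q x) \<le> 0" using Q1[of x] by simp
    ultimately show ?thesis by (simp add: mult_nonneg_nonpos)
  qed
  have termb: "Q x * W x y * ln (W x y / PP Q W y) \<le> -(Q x * ln (Q x)) * W x y" for x y
  proof (cases "Q x * W x y = 0")
    case True
    then show ?thesis using nl[of x] Wn by auto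
  next
    case False
    then have qw: "0 < Q x * W x y" using Qn Wn by (simp add: order_less_le)
    have le: "Q x * W x y \<le> PP Q W y" using PP_ge[OF Qn Wn] .
    then have p: "0 < PP Q W y" using qw by linarith
    have q: "0 < Q x" and w: "0 < W x y" using Qn Wn False by (auto simp: order_less_le)
    have "ln (Q x * W x y / PP Q W y) \<le> 0" using qw p le by simp
    moreover have "ln (Q x * W x y / PP Q W y) = ln (Q x) + ln (W x y / PP Q W y)"
      using q w p by (simp add: ln_div ln_mult)
    ultimately have "ln (W x y / PP Q W y) \<le> - ln (Q x)" by linarith
    then have "(Q x * W x y) * ln (W x y / PP Q W y) \<le> (Q x * W x y) * (- ln (Q x))"
      using qw by (intro mult_left_mono) auto
    then show ?thesis by (simp add: algebra_simps)
  qed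
  define sg where "sg = fc_sigma W"
  have Sle: "(\<Sum>y\<in>UNIV. W x y) \<le> sg" for x
    unfolding sg_def fc_sigma_def by (rule Max_ge) auto
  have sg0: "0 \<le> sg" using Sle[of undefined] sum_nonneg[of UNIV "W undefined"] Wn by force
  have "false_mi Q W \<le> (\<Sum>x\<in>UNIV. \<Sum>y\<in>UNIV. -(Q x * ln (Q x)) * W x y)"
    unfolding fmi_eq by (intro sum_mono termb)
  also have "\<dots> = (\<Sum>x\<in>UNIV. -(Q x * ln (Q x)) * (\<Sum>y\<in>UNIV. W x y))"
    by (simp add: sum_distrib_left)
  also have "\<dots> \<le> (\<Sum>x\<in>UNIV. -(Q x * ln (Q x)) * sg)"
    by (intro sum_mono mult_left_mono Sle nl)
  also have "\<dots> = sg * (- (\<Sum>x\<in>UNIV. Q x * ln (Q x)))"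
    by (simp add: sum_distrib_left sum_negf algebra_simps)
  also have "\<dots> \<le> sg * ln (real (card (UNIV :: 'x set)))"
  proof (rule mult_left_mono[OF _ sg0])
    define n where "n = real (card (UNIV :: 'x set))"
    have n: "0 < n" unfolding n_def by (simp add: finite_UNIV_card_ge_0)
    have "(\<Sum>x\<in>UNIV. Q x) * ln ((\<Sum>x\<in>UNIV. Q x) / (\<Sum>x\<in>(UNIV::'x set). 1 / n))
        \<le> (\<Sum>x\<in>UNIV. Q x * ln (Q x / (1 / n)))"
      by (rule logsum) (use Qn n in auto)
    moreover have "(\<Sum>x\<in>(UNIV::'x set). 1 / n) = 1" unfolding n_def by simp
    moreover have "Q x * ln (Q x / (1 / n)) = Q x * ln (Q x) + Q x * ln n" for x
    proof (cases "Q x = 0")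
      case True then show ?thesis by simp
    next
      case False
      then have "0 < Q x" using Qn by (simp add: order_less_le)
      then show ?thesis using n by (simp add: ln_mult algebra_simps)
    qed
    ultimately have "0 \<le> (\<Sum>x\<in>UNIV. Q x * ln (Q x)) + (\<Sum>x\<in>UNIV. Q x) * ln n"
      using Qs by (simp add: sum.distrib flip: sum_distrib_right)
    then show "- (\<Sum>x\<in>UNIV. Q x * ln (Q x)) \<le> ln (real (card (UNIV :: 'x set)))"
      using Qs unfolding n_def by simp
  qed
  finally show ?thesis unfolding sg_def .
qed

theorem lemma6:
  shows "(\<forall>(Q::'x::finite \<Rightarrow> real) (W::'x \<Rightarrow> 'y::finite \<Rightarrow> real).
            is_distr Q \<longrightarrow> false_channel W \<longrightarrow> 0 \<le> false_mi Q W)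
       \<and> (\<forall>(Q1::'x \<Rightarrow> real) Q2 (W::'x \<Rightarrow> 'y \<Rightarrow> real) (t::real).
            is_distr Q1 \<longrightarrow> is_distr Q2 \<longrightarrow> false_channel W \<longrightarrow> 0 \<le> t \<longrightarrow> t \<le> 1 \<longrightarrow>
            t * false_mi Q1 W + (1 - t) * false_mi Q2 W
              \<le> false_mi (\<lambda>x. t * Q1 x + (1 - t) * Q2 x) W)
       \<and> (\<forall>(Q::'x \<Rightarrow> real) (W1::'x \<Rightarrow> 'y \<Rightarrow> real) W2 (t::real).
            is_distr Q \<longrightarrow> false_channel W1 \<longrightarrow> false_channel W2 \<longrightarrow> 0 \<le> t \<longrightarrow> t \<le> 1 \<longrightarrow>
            false_mi Q (\<lambda>x y. t * W1 x y + (1 - t) * W2 x y)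
              \<le> t * false_mi Q W1 + (1 - t) * false_mi Q W2)
       \<and> (\<forall>(Q::'x \<Rightarrow> real) (W::'x \<Rightarrow> 'y \<Rightarrow> real).
            is_distr Q \<longrightarrow> false_channel W \<longrightarrow>
            false_mi Q W \<le> fc_sigma W * ln (real (card (UNIV :: 'x set))))"
  using part1 part2 part3 part4 by blast

end
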